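(* Let $d\ge 3$ be a prime, $\omega=e^{2\pi i/d}$, and $-\frac{1}{d^2-1}\le p\le 1$. Let $\rho_{AB}=p\,|\Psi^+\rangle\langle\Psi^+|+(1-p)\frac{\mathbb{I}}{d^2}$ on $\mathbb{C}^d\otimes\mathbb{C}^d$, where $|\Psi^+\rangle=\frac{1}{\sqrt d}\sum_{i=0}^{d-1}|ii\rangle$. Consider the $d+1$ mutually unbiased bases consisting of the computational basis $\mathcal{Z}=\{|0\rangle,\dots,|d-1\rangle\}$, the Fourier basis $\mathcal{X}=\{\mathcal{F}|0\rangle,\dots,\mathcal{F}|d-1\rangle\}$, and the bases $M_k=\{D^k\mathcal{F}|l\rangle\}_{l=0}^{d-1}$ for $k=1,\dots,d-1$. Then $I(M_k^A:M_k^B)=0$ for every $k=1,\dots,d-1$, and $$I(Z^A:Z^B)=I(X^A:X^B)=2\log(d)+d\Big(\tfrac{p}{d}+\tfrac{1-p}{d^2}\Big)\log\Big(\tfrac{p}{d}+\tfrac{1-p}{d^2}\Big)+(d^2-d)\,\tfrac{1-p}{d^2}\log\Big(\tfrac{1-p}{d^2}\Big).$$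
   Context: Logarithms are base 2, $0\log 0=0$. $\mathcal{F}=\frac{1}{\sqrt d}\sum_{x,y=0}^{d-1}\omega^{xy}|x\rangle\langle y|$ and $D=\mathrm{diag}(\omega^{j^2})_{j=0}^{d-1}$. For a basis $\{|m_j\rangle\}$, $M^A,M^B$ are the outcomes when both parties measure their subsystem in that basis, with joint distribution $p(j,k)=\langle m_j\otimes m_k|\rho_{AB}|m_j\otimes m_k\rangle$, and $I(M^A:M^B)=H(M^A)+H(M^B)-H(M^AM^B)$ is the classical (Shannon) mutual information. *)

theory Defs
  imports Complex_Main "HOL-Computational_Algebra.Primes"
begin

text \<open>Vectors in C^d are functions nat => complex (only indices < d matter);
  d x d matrices are functions nat => nat => complex; vectors in C^d (x) C^d are
  functions on pairs (a,b), and operators on C^d (x) C^d are functions of two pairs.\<close>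

definition omega :: "nat \<Rightarrow> complex" where
  "omega d = exp (2 * pi * \<i> / of_nat d)"

definition ket :: "nat \<Rightarrow> nat \<Rightarrow> complex" where
  "ket j = (\<lambda>a. if a = j then 1 else 0)"

definition mat_vec :: "nat \<Rightarrow> (nat \<Rightarrow> nat \<Rightarrow> complex) \<Rightarrow> (nat \<Rightarrow> complex) \<Rightarrow> nat \<Rightarrow> complex" where
  "mat_vec d A v = (\<lambda>x. \<Sum>y<d. A x y * v y)"

definition mat_mult :: "nat \<Rightarrow> (nat \<Rightarrow> nat \<Rightarrow> complex) \<Rightarrow> (nat \<Rightarrow> nat \<Rightarrow> complex) \<Rightarrow> nat \<Rightarrow> nat \<Rightarrow> complex" where
  "mat_mult d A B = (\<lambda>x z. \<Sum>y<d. A x y * B y z)"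

definition id_mat :: "nat \<Rightarrow> nat \<Rightarrow> complex" where
  "id_mat = (\<lambda>x y. if x = y then 1 else 0)"

definition mat_pow :: "nat \<Rightarrow> (nat \<Rightarrow> nat \<Rightarrow> complex) \<Rightarrow> nat \<Rightarrow> nat \<Rightarrow> nat \<Rightarrow> complex" where
  "mat_pow d A k = ((mat_mult d A) ^^ k) id_mat"

definition F_mat :: "nat \<Rightarrow> nat \<Rightarrow> nat \<Rightarrow> complex" where
  "F_mat d = (\<lambda>x y. omega d ^ (x * y) / complex_of_real (sqrt (real d)))"

definition D_mat :: "nat \<Rightarrow> nat \<Rightarrow> nat \<Rightarrow> complex" where
  "D_mat d = (\<lambda>x y. if x = y then omega d ^ (x ^ 2) else 0)"

text \<open>Bases: a basis is given as a map j \<mapsto> |m_j>.\<close>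
definition Z_basis :: "nat \<Rightarrow> nat \<Rightarrow> nat \<Rightarrow> complex" where
  "Z_basis d = (\<lambda>j. ket j)"

definition X_basis :: "nat \<Rightarrow> nat \<Rightarrow> nat \<Rightarrow> complex" where
  "X_basis d = (\<lambda>l. mat_vec d (F_mat d) (ket l))"

definition M_basis :: "nat \<Rightarrow> nat \<Rightarrow> nat \<Rightarrow> nat \<Rightarrow> complex" where
  "M_basis d k = (\<lambda>l. mat_vec d (mat_pow d (D_mat d) k) (mat_vec d (F_mat d) (ket l)))"

definition tensor :: "(nat \<Rightarrow> complex) \<Rightarrow> (nat \<Rightarrow> complex) \<Rightarrow> nat \<times> nat \<Rightarrow> complex" where
  "tensor v w = (\<lambda>(a, b). v a * w b)"

definition psi_plus :: "nat \<Rightarrow> nat \<times> nat \<Rightarrow> complex" where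
  "psi_plus d = (\<lambda>(a, b). \<Sum>i<d. tensor (ket i) (ket i) (a, b) / complex_of_real (sqrt (real d)))"

definition rho_iso :: "nat \<Rightarrow> real \<Rightarrow> nat \<times> nat \<Rightarrow> nat \<times> nat \<Rightarrow> complex" where
  "rho_iso d p = (\<lambda>x y. complex_of_real p * psi_plus d x * cnj (psi_plus d y)
      + complex_of_real ((1 - p) / real d ^ 2) * (if x = y then 1 else 0))"

definition expect :: "nat \<Rightarrow> (nat \<times> nat \<Rightarrow> nat \<times> nat \<Rightarrow> complex) \<Rightarrow> (nat \<times> nat \<Rightarrow> complex) \<Rightarrow> complex" where
  "expect d rho u = (\<Sum>x\<in>{..<d} \<times> {..<d}. \<Sum>y\<in>{..<d} \<times> {..<d}. cnj (u x) * rho x y * u y)"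

definition joint_prob :: "nat \<Rightarrow> (nat \<times> nat \<Rightarrow> nat \<times> nat \<Rightarrow> complex) \<Rightarrow> (nat \<Rightarrow> nat \<Rightarrow> complex) \<Rightarrow> nat \<Rightarrow> nat \<Rightarrow> real" where
  "joint_prob d rho m j k = Re (expect d rho (tensor (m j) (m k)))"

definition plogp :: "real \<Rightarrow> real" where
  "plogp x = (if x = 0 then 0 else x * log 2 x)"

definition entropy_A :: "nat \<Rightarrow> (nat \<times> nat \<Rightarrow> nat \<times> nat \<Rightarrow> complex) \<Rightarrow> (nat \<Rightarrow> nat \<Rightarrow> complex) \<Rightarrow> real" where
  "entropy_A d rho m = - (\<Sum>j<d. plogp (\<Sum>k<d. joint_prob d rho m j k))"

definition entropy_B :: "nat \<Rightarrow> (nat \<times> nat \<Rightarrow> nat \<times> nat \<Rightarrow> complex) \<Rightarrow> (nat \<Rightarrow> nat \<Rightarrow> complex) \<Rightarrow> real" where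
  "entropy_B d rho m = - (\<Sum>k<d. plogp (\<Sum>j<d. joint_prob d rho m j k))"

definition entropy_AB :: "nat \<Rightarrow> (nat \<times> nat \<Rightarrow> nat \<times> nat \<Rightarrow> complex) \<Rightarrow> (nat \<Rightarrow> nat \<Rightarrow> complex) \<Rightarrow> real" where
  "entropy_AB d rho m = - (\<Sum>j<d. \<Sum>k<d. plogp (joint_prob d rho m j k))"

definition mutual_info :: "nat \<Rightarrow> (nat \<times> nat \<Rightarrow> nat \<times> nat \<Rightarrow> complex) \<Rightarrow> (nat \<Rightarrow> nat \<Rightarrow> complex) \<Rightarrow> real" where
  "mutual_info d rho m = entropy_A d rho m + entropy_B d rho m - entropy_AB d rho m"

end

theory Submission
  imports Defs "HOL-Analysis.Analysis"
begin

definition E :: "nat \<Rightarrow> int \<Rightarrow> complex" where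
  "E d z = exp (2 * pi * \<i> * of_int z / of_nat d)"

lemma E_add: "E d (a + b) = E d a * E d b"
  unfolding E_def by (simp add: exp_add[symmetric] distrib_left add_divide_distrib)

lemma E_cnj: "cnj (E d z) = E d (- z)"
  unfolding E_def by (simp add: exp_cnj)

lemma E_zero[simp]: "E d 0 = 1" unfolding E_def by simp

lemma E_one_iff: assumes "d > 0" shows "E d z = 1 \<longleftrightarrow> int d dvd z"
proof
  assume "E d z = 1"
  then obtain n :: int where n: "Im (2 * pi * \<i> * of_int z / of_nat d) = of_int (2 * n) * pi"
    unfolding E_def exp_eq_1 by blast
  have "2 * pi * of_int z / real d = of_int (2*n) * pi" using n by simp
  then have "real_of_int z = real_of_int n * real d" using assms by (simp add: field_simps)
  then have "z = n * int d" by (metis of_int_eq_iff of_int_mult of_int_of_nat_eq)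
  then show "int d dvd z" by simp
next
  assume "int d dvd z"
  then obtain n where "z = int d * n" by blast
  then have "2 * pi * \<i> * of_int z / of_nat d = \<i> * (of_int n * (of_real pi * 2))"
    using assms by (simp add: field_simps)
  then show "E d z = 1" unfolding E_def by (simp only: exp_2pi_1_int)
qed

lemma E_cong: assumes "d > 0" "int d dvd a - b" shows "E d a = E d b"
proof -
  from assms(2) have "E d (a - b) = 1" using E_one_iff assms(1) by blast
  then show ?thesis using E_add[of d "a - b" b] by simp
qed

lemma omega_pow: "omega d ^ n = E d (int n)"
  unfolding omega_def E_def by (simp add: exp_of_nat_mult[symmetric] field_simps)

lemma E_pow: "E d z ^ n = E d (z * int n)"
  unfolding E_def by (simp add: exp_of_nat_mult[symmetric] field_simps)

lemma sum_E_lin: assumes "d > 0"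
  shows "(\<Sum>y<d. E d (c * int y)) = (if int d dvd c then of_nat d else 0)"
proof (cases "int d dvd c")
  case True
  then have "E d (c * int y) = 1" for y using E_one_iff assms by auto
  then show ?thesis using True by simp
next
  case False
  then have ne: "E d c \<noteq> 1" using E_one_iff assms by auto
  have "(\<Sum>y<d. E d (c * int y)) = (\<Sum>y<d. E d c ^ y)" by (simp add: E_pow)
  also have "\<dots> = (E d c ^ d - 1) / (E d c - 1)" by (rule geometric_sum[OF ne])
  also have "E d c ^ d = 1" using E_pow E_one_iff assms by simp
  finally show ?thesis using False by simp
qed

lemma E_mod_poly: assumes "d > 0"
  shows "E d (a * int (n mod d)^2 + b * int (n mod d)) = E d (a * int n ^ 2 + b * int n)"
proof -
  have m: "int (n mod d) = int n mod int d" by (simp add: zmod_int)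
  have dv: "int d dvd int (n mod d) - int n" unfolding m by (simp add: mod_eq_dvd_iff[symmetric])
  have eq: "(a * int (n mod d)^2 + b * int (n mod d)) - (a * int n ^ 2 + b * int n)
     = (int (n mod d) - int n) * (a * (int (n mod d) + int n) + b)"
    by (simp add: algebra_simps power2_eq_square)
  have "int d dvd (a * int (n mod d)^2 + b * int (n mod d)) - (a * int n ^ 2 + b * int n)"
    unfolding eq using dv by (rule dvd_mult2)
  then show ?thesis using E_cong assms by blast
qed

lemma shift_sum: assumes "d > 0" "y < d"
  shows "(\<Sum>t<d. E d (a * int (y+t) ^ 2 + b * int (y+t) - c)) = (\<Sum>x<d. E d (a * int x ^ 2 + b * int x - c))"
proof (rule sum.reindex_bij_witness[where j = "\<lambda>t. (y + t) mod d" and i = "\<lambda>x. (x + d - y) mod d"])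
  fix t assume "t \<in> {..<d}"
  then show "(((y + t) mod d) + d - y) mod d = t" using assms
    by (cases "y + t < d") (auto simp: le_mod_geq)
next
  fix x assume "x \<in> {..<d}"
  then show "(y + (x + d - y) mod d) mod d = x" using assms
    by (cases "x + d - y < d") (auto simp: le_mod_geq)
next
  fix t assume "t \<in> {..<d}"
  have "E d (a * int ((y+t) mod d) ^ 2 + b * int ((y+t) mod d) - c)
      = E d (a * int ((y+t) mod d) ^ 2 + b * int ((y+t) mod d)) * E d (- c)"
    by (metis E_add diff_conv_add_uminus)
  also have "\<dots> = E d (a * int (y+t) ^ 2 + b * int (y+t)) * E d (- c)"
    using E_mod_poly[OF assms(1)] by simp
  also have "\<dots> = E d (a * int (y+t) ^ 2 + b * int (y+t) - c)"
    by (metis E_add diff_conv_add_uminus)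
  finally show "E d (a * int ((y+t) mod d) ^ 2 + b * int ((y+t) mod d) - c) = E d (a * int (y+t) ^ 2 + b * int (y+t) - c)" .
qed auto

lemma dvd_2at: assumes "prime d" "d \<ge> 3" "\<not> int d dvd a" "t < d"
  shows "int d dvd 2 * a * int t \<longleftrightarrow> t = 0"
proof
  assume h: "int d dvd 2 * a * int t"
  have p: "prime (int d)" using assms(1) by simp
  have n2: "\<not> int d dvd 2"
  proof
    assume "int d dvd 2" then have "int d \<le> 2" by (rule zdvd_imp_le) simp
    then show False using assms(2) by simp
  qed
  from h p n2 assms(3) have "int d dvd int t" by (simp add: prime_dvd_mult_iff)
  then have "d dvd t" by simp
  then show "t = 0" using assms(4) by (metis dvd_imp_le gr0I leD)
qed simp

lemma gauss_sq: assumes "prime d" "d \<ge> 3" "\<not> int d dvd a"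
  shows "(\<Sum>x<d. E d (a*int x^2 + b*int x)) * cnj (\<Sum>x<d. E d (a*int x^2 + b*int x)) = of_nat d"
proof -
  have d0: "d > 0" using assms(2) by simp
  let ?f = "\<lambda>x::nat. a*int x^2 + b*int x"
  have "(\<Sum>x<d. E d (?f x)) * cnj (\<Sum>x<d. E d (?f x)) = (\<Sum>x<d. \<Sum>y<d. E d (?f x) * E d (- ?f y))"
    by (simp add: sum_product E_cnj)
  also have "\<dots> = (\<Sum>y<d. \<Sum>x<d. E d (a * int x ^ 2 + b * int x - ?f y))"
    by (subst sum.swap) (simp add: E_add[symmetric] algebra_simps)
  also have "\<dots> = (\<Sum>y<d. \<Sum>t<d. E d (a * int (y+t) ^ 2 + b * int (y+t) - ?f y))"
    by (rule sum.cong[OF refl], rule shift_sum[symmetric, OF d0]) simp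
  also have "\<dots> = (\<Sum>y<d. \<Sum>t<d. E d (?f t) * E d ((2 * a * int t) * int y))"
  proof (rule sum.cong[OF refl], rule sum.cong[OF refl])
    fix y t
    have "a * int (y+t) ^ 2 + b * int (y+t) - ?f y = ?f t + (2 * a * int t) * int y"
      by (simp add: algebra_simps power2_eq_square)
    then show "E d (a * int (y+t) ^ 2 + b * int (y+t) - ?f y) = E d (?f t) * E d ((2 * a * int t) * int y)"
      by (simp add: E_add)
  qed
  also have "\<dots> = (\<Sum>t<d. E d (?f t) * (\<Sum>y<d. E d ((2 * a * int t) * int y)))"
    by (subst sum.swap) (simp add: sum_distrib_left)
  also have "\<dots> = (\<Sum>t<d. if t = 0 then of_nat d else 0)"
    by (rule sum.cong[OF refl]) (simp add: sum_E_lin[OF d0] dvd_2at[OF assms])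
  also have "\<dots> = of_nat d" using d0 by simp
  finally show ?thesis .
qed

lemma psi_val: assumes "a < d" "b < d"
  shows "psi_plus d (a, b) = (if a = b then 1 else 0) / complex_of_real (sqrt (real d))"
proof -
  have "psi_plus d (a, b) = (\<Sum>i<d. if i = a then (if a = b then 1 else 0) / complex_of_real (sqrt (real d)) else 0)"
    unfolding psi_plus_def tensor_def ket_def prod.case by (intro sum.cong refl) auto
  also have "\<dots> = (if a = b then 1 else 0) / complex_of_real (sqrt (real d))"
    using assms by (simp only: sum.delta finite_lessThan lessThan_iff if_True)
  finally show ?thesis .
qed

lemma sum_pair_psi:
  "(\<Sum>x\<in>{..<d} \<times> {..<d}. cnj (tensor u v x) * psi_plus d x)
   = (\<Sum>i<d. cnj (u i) * cnj (v i)) / complex_of_real (sqrt (real d))"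
proof -
  have "(\<Sum>x\<in>{..<d} \<times> {..<d}. cnj (tensor u v x) * psi_plus d x)
     = (\<Sum>(a,b)\<in>{..<d} \<times> {..<d}. cnj (u a * v b) * psi_plus d (a, b))"
    by (rule sum.cong) (auto simp: tensor_def)
  also have "\<dots> = (\<Sum>a<d. \<Sum>b<d. cnj (u a * v b) * psi_plus d (a, b))"
    by (simp add: sum.cartesian_product)
  also have "\<dots> = (\<Sum>a<d. \<Sum>b<d. if b = a then cnj (u a * v a) / complex_of_real (sqrt (real d)) else 0)"
    by (rule sum.cong[OF refl], rule sum.cong[OF refl]) (auto simp: psi_val)
  also have "\<dots> = (\<Sum>a<d. cnj (u a) * cnj (v a) / complex_of_real (sqrt (real d)))"
    by (simp add: sum.delta')
  also have "\<dots> = (\<Sum>i<d. cnj (u i) * cnj (v i)) / complex_of_real (sqrt (real d))"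
    by (simp add: sum_divide_distrib)
  finally show ?thesis .
qed

lemma L1: "(\<Sum>x\<in>S. \<Sum>y\<in>S. (c::complex) * (X x * Y y)) = c * ((\<Sum>x\<in>S. X x) * (\<Sum>y\<in>S. Y y))"
proof -
  have "(\<Sum>x\<in>S. X x) * (\<Sum>y\<in>S. Y y) = (\<Sum>x\<in>S. \<Sum>y\<in>S. X x * Y y)" by (rule sum_product)
  then show ?thesis by (simp only: sum_distrib_left)
qed

lemma L2: "finite S \<Longrightarrow> (\<Sum>x\<in>S. \<Sum>y\<in>S. (c::complex) * (if x = y then g x else 0)) = c * (\<Sum>x\<in>S. g x)"
proof -
  assume f: "finite S"
  have "(\<Sum>y\<in>S. c * (if x = y then g x else 0)) = c * g x" if "x \<in> S" for x
  proof -
    have "(\<Sum>y\<in>S. c * (if x = y then g x else 0)) = c * (\<Sum>y\<in>S. (if x = y then g x else 0))"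
      by (simp only: sum_distrib_left)
    also have "\<dots> = c * g x" using f that by (simp only: sum.delta sum.delta' if_True)
    finally show ?thesis .
  qed
  then show ?thesis by (simp add: sum_distrib_left)
qed

lemma expect_tensor:
  "expect d (rho_iso d p) (tensor u v) =
     of_real p * (((\<Sum>i<d. cnj (u i) * cnj (v i)) / complex_of_real (sqrt (real d)))
        * cnj ((\<Sum>i<d. cnj (u i) * cnj (v i)) / complex_of_real (sqrt (real d))))
   + of_real ((1 - p) / real d ^ 2) * ((\<Sum>a<d. cnj (u a) * u a) * (\<Sum>b<d. cnj (v b) * v b))"
proof -
  let ?S = "{..<d} \<times> {..<d}"
  let ?w = "tensor u v"
  let ?A = "(\<Sum>x\<in>?S. cnj (?w x) * psi_plus d x)"
  have "expect d (rho_iso d p) ?w = (\<Sum>x\<in>?S. \<Sum>y\<in>?S.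
      of_real p * ((cnj (?w x) * psi_plus d x) * cnj (cnj (?w y) * psi_plus d y))
      + of_real ((1 - p) / real d ^ 2) * (if x = y then cnj (?w x) * ?w x else 0))"
    unfolding expect_def rho_iso_def by (rule sum.cong[OF refl], rule sum.cong[OF refl]) (simp add: algebra_simps)
  also have "\<dots> = of_real p * (?A * cnj ?A) + of_real ((1 - p) / real d ^ 2) * (\<Sum>x\<in>?S. cnj (?w x) * ?w x)"
    by (simp only: sum.distrib L1 L2 finite_cartesian_product finite_lessThan cnj_sum[symmetric])
  also have "(\<Sum>x\<in>?S. cnj (?w x) * ?w x) = (\<Sum>a<d. cnj (u a) * u a) * (\<Sum>b<d. cnj (v b) * v b)"
  proof -
    have "(\<Sum>x\<in>?S. cnj (?w x) * ?w x) = (\<Sum>(a,b)\<in>?S. (cnj (u a) * u a) * (cnj (v b) * v b))"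
      by (rule sum.cong) (auto simp: tensor_def)
    also have "\<dots> = (\<Sum>a<d. \<Sum>b<d. (cnj (u a) * u a) * (cnj (v b) * v b))"
      by (simp add: sum.cartesian_product)
    also have "\<dots> = (\<Sum>a<d. cnj (u a) * u a) * (\<Sum>b<d. cnj (v b) * v b)"
      by (simp add: sum_product)
    finally show ?thesis .
  qed
  finally show ?thesis unfolding sum_pair_psi .
qed

lemma joint_prob_formula:
  assumes norm: "\<And>j. j < d \<Longrightarrow> (\<Sum>i<d. cnj (m j i) * m j i) = 1"
    and "j < d" "k < d"
  shows "joint_prob d (rho_iso d p) m j k = p * cmod (\<Sum>i<d. m j i * m k i) ^ 2 / real d + (1 - p) / real d ^ 2"
proof -
  define B where "B = (\<Sum>i<d. cnj (m j i) * cnj (m k i)) / complex_of_real (sqrt (real d))"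
  have "B = cnj (\<Sum>i<d. m j i * m k i) / complex_of_real (sqrt (real d))" unfolding B_def by simp
  then have "cmod B = cmod (\<Sum>i<d. m j i * m k i) / sqrt (real d)"
    by (simp add: norm_divide del: cnj_sum)
  then have cB: "cmod B ^ 2 = cmod (\<Sum>i<d. m j i * m k i) ^ 2 / real d"
    by (simp add: power_divide)
  have BB: "B * cnj B = of_real (cmod B ^ 2)" by (rule complex_norm_square[symmetric])
  have "expect d (rho_iso d p) (tensor (m j) (m k)) = of_real p * (B * cnj B) + of_real ((1 - p) / real d ^ 2)"
    unfolding expect_tensor B_def[symmetric] using norm[OF assms(2)] norm[OF assms(3)] by simp
  also have "\<dots> = of_real (p * cmod B ^ 2 + (1 - p) / real d ^ 2)" unfolding BB by simp
  finally show ?thesis unfolding joint_prob_def cB by simp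
qed

lemma E_norm1: "cnj (E d z) * E d z = 1"
proof -
  have "cnj (E d z) * E d z = E d (- z + z)" by (simp only: E_cnj E_add)
  then show ?thesis by simp
qed

lemma sqrt_sq_c: "complex_of_real (sqrt (real d)) * complex_of_real (sqrt (real d)) = of_nat d"
proof -
  have "complex_of_real (sqrt (real d)) * complex_of_real (sqrt (real d)) = complex_of_real (sqrt (real d) * sqrt (real d))"
    by (rule of_real_mult[symmetric])
  also have "\<dots> = complex_of_real (real d)" by simp
  also have "\<dots> = of_nat d" by (rule of_real_of_nat_eq)
  finally show ?thesis .
qed

lemma X_val: assumes "l < d" shows "X_basis d l i = E d (int i * int l) / complex_of_real (sqrt (real d))"
proof -
  have "X_basis d l i = (\<Sum>y<d. if y = l then F_mat d i l else 0)"
    unfolding X_basis_def mat_vec_def ket_def by (intro sum.cong refl) auto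
  also have "\<dots> = F_mat d i l" using assms by simp
  finally show ?thesis unfolding F_mat_def omega_pow by simp
qed

lemma mat_pow_Suc: "mat_pow d A (Suc k) = mat_mult d A (mat_pow d A k)"
  unfolding mat_pow_def by simp

lemma D_pow_val: assumes "x < d"
  shows "mat_pow d (D_mat d) k x y = (if x = y then E d (int k * int x ^ 2) else 0)"
proof (induction k arbitrary: y)
  case 0
  then show ?case by (simp add: mat_pow_def id_mat_def)
next
  case (Suc k)
  have "mat_pow d (D_mat d) (Suc k) x y = (\<Sum>z<d. D_mat d x z * mat_pow d (D_mat d) k z y)"
    unfolding mat_pow_Suc mat_mult_def by (rule refl)
  also have "\<dots> = (\<Sum>z<d. if z = x then D_mat d x x * mat_pow d (D_mat d) k x y else 0)"
    by (intro sum.cong refl) (auto simp: D_mat_def)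
  also have "\<dots> = D_mat d x x * mat_pow d (D_mat d) k x y" using assms by simp
  also have "\<dots> = D_mat d x x * (if x = y then E d (int k * int x ^ 2) else 0)"
    by (simp only: Suc.IH)
  also have "\<dots> = (if x = y then E d (int (Suc k) * int x ^ 2) else 0)"
  proof -
    have h: "E d (int (z^2)) * E d (int k * int z^2) = E d (int (Suc k) * int z^2)" for z
      by (simp only: E_add[symmetric]) (simp add: algebra_simps)
    have Dxx: "D_mat d x x = E d (int (x^2))" by (simp add: D_mat_def omega_pow)
    show ?thesis
    proof (cases "x = y")
      case True show ?thesis unfolding True[symmetric] if_P[OF refl] Dxx h ..
    next
      case False then show ?thesis by (simp only: if_False mult_zero_right)
    qed
  qed
  finally show ?case .
qed

lemma M_val: assumes "l < d" "i < d"
  shows "M_basis d k l i = E d (int k * int i ^ 2) * (E d (int i * int l) / complex_of_real (sqrt (real d)))"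
proof -
  have "M_basis d k l i = (\<Sum>y<d. mat_pow d (D_mat d) k i y * X_basis d l y)"
    unfolding M_basis_def X_basis_def mat_vec_def by (rule refl)
  also have "\<dots> = (\<Sum>y<d. if y = i then E d (int k * int i ^ 2) * X_basis d l i else 0)"
    by (intro sum.cong refl) (auto simp: D_pow_val[OF assms(2)])
  also have "\<dots> = E d (int k * int i ^ 2) * X_basis d l i" using assms by simp
  finally show ?thesis unfolding X_val[OF assms(1)] .
qed

lemma norm_scaled: assumes "d > 0" "\<And>i. i < d \<Longrightarrow> m i = E d (f i) / complex_of_real (sqrt (real d))"
  shows "(\<Sum>i<d. cnj (m i) * m i) = 1"
proof -
  have "(\<Sum>i<d. cnj (m i) * m i) = (\<Sum>i<d. 1 / of_nat d)"
  proof (intro sum.cong refl)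
    fix i assume "i \<in> {..<d}"
    then have "cnj (m i) * m i = (cnj (E d (f i)) * E d (f i)) / (complex_of_real (sqrt (real d)) * complex_of_real (sqrt (real d)))"
      using assms(2) by (simp add: E_cnj)
    then show "cnj (m i) * m i = 1 / of_nat d" by (simp only: E_norm1 sqrt_sq_c)
  qed
  also have "\<dots> = 1" using assms(1) by simp
  finally show ?thesis .
qed

lemma Z_joint: assumes "j < d" "k < d" "d > 0"
  shows "joint_prob d (rho_iso d p) (Z_basis d) j k = (if j = k then p / real d + (1 - p) / real d ^ 2 else (1 - p) / real d ^ 2)"
proof -
  have n: "(\<Sum>i<d. cnj (Z_basis d j i) * Z_basis d j i) = 1" if "j < d" for j
  proof -
    have "(\<Sum>i<d. cnj (Z_basis d j i) * Z_basis d j i) = (\<Sum>i<d. if i = j then 1 else 0)"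
      by (intro sum.cong refl) (simp add: Z_basis_def ket_def)
    then show ?thesis using that by simp
  qed
  have g: "(\<Sum>i<d. Z_basis d j i * Z_basis d k i) = (if j = k then 1 else 0)"
  proof -
    have "(\<Sum>i<d. Z_basis d j i * Z_basis d k i) = (\<Sum>i<d. if i = j then (if j = k then 1 else 0) else 0)"
      by (intro sum.cong refl) (auto simp: Z_basis_def ket_def)
    then show ?thesis using assms by simp
  qed
  have jf: "joint_prob d (rho_iso d p) (Z_basis d) j k = p * cmod (\<Sum>i<d. Z_basis d j i * Z_basis d k i) ^ 2 / real d + (1 - p) / real d ^ 2"
    by (rule joint_prob_formula[OF _ assms(1,2)]) (erule n)
  show ?thesis unfolding jf g by simp
qed

lemma X_joint: assumes "j < d" "k < d" "d > 0"
  shows "joint_prob d (rho_iso d p) (X_basis d) j k = (if d dvd j + k then p / real d + (1 - p) / real d ^ 2 else (1 - p) / real d ^ 2)"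
proof -
  have n: "(\<Sum>i<d. cnj (X_basis d j i) * X_basis d j i) = 1" if "j < d" for j
    by (rule norm_scaled[OF assms(3)]) (rule X_val[OF that])
  have "(\<Sum>i<d. X_basis d j i * X_basis d k i) = (\<Sum>i<d. E d ((int j + int k) * int i) / of_nat d)"
  proof (intro sum.cong refl)
    fix i
    have "X_basis d j i * X_basis d k i = (E d (int i * int j) * E d (int i * int k)) / (complex_of_real (sqrt (real d)) * complex_of_real (sqrt (real d)))"
      using X_val assms by simp
    also have "\<dots> = E d ((int j + int k) * int i) / of_nat d"
      by (simp only: sqrt_sq_c E_add[symmetric]) (simp add: algebra_simps)
    finally show "X_basis d j i * X_basis d k i = E d ((int j + int k) * int i) / of_nat d" .
  qed
  also have "\<dots> = (\<Sum>i<d. E d ((int j + int k) * int i)) / of_nat d" by (simp add: sum_divide_distrib)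
  also have "\<dots> = (if d dvd j + k then 1 else 0)"
  proof -
    have dv: "int d dvd int j + int k \<longleftrightarrow> d dvd j + k"
      by (metis of_nat_add of_nat_dvd_iff)
    show ?thesis unfolding sum_E_lin[OF assms(3)] dv using assms(3) by simp
  qed
  finally have g: "(\<Sum>i<d. X_basis d j i * X_basis d k i) = (if d dvd j + k then 1 else 0)" .
  have jf: "joint_prob d (rho_iso d p) (X_basis d) j k = p * cmod (\<Sum>i<d. X_basis d j i * X_basis d k i) ^ 2 / real d + (1 - p) / real d ^ 2"
    by (rule joint_prob_formula[OF _ assms(1,2)]) (erule n)
  show ?thesis unfolding jf g by simp
qed

lemma M_joint: assumes "j < d" "l < d" "prime d" "d \<ge> 3" "1 \<le> k" "k \<le> d - 1"
  shows "joint_prob d (rho_iso d p) (M_basis d k) j l = 1 / real d ^ 2"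
proof -
  have d0: "d > 0" using assms by simp
  have n: "(\<Sum>i<d. cnj (M_basis d k j i) * M_basis d k j i) = 1" if "j < d" for j
  proof (rule norm_scaled[OF d0])
    fix i assume "i < d"
    then show "M_basis d k j i = E d (int k * int i ^ 2 + int i * int j) / complex_of_real (sqrt (real d))"
      using M_val[OF that] by (simp add: E_add)
  qed
  let ?S = "\<Sum>x<d. E d (int (2 * k) * int x ^ 2 + int (j + l) * int x)"
  have "(\<Sum>i<d. M_basis d k j i * M_basis d k l i) = (\<Sum>x<d. E d (int (2 * k) * int x ^ 2 + int (j + l) * int x) / of_nat d)"
  proof (intro sum.cong refl)
    fix i assume "i \<in> {..<d}"
    then have "M_basis d k j i * M_basis d k l i = (E d (int k * int i ^ 2) * E d (int i * int j) * (E d (int k * int i ^ 2) * E d (int i * int l))) / (complex_of_real (sqrt (real d)) * complex_of_real (sqrt (real d)))"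
      using M_val assms by simp
    also have "\<dots> = E d (int (2 * k) * int i ^ 2 + int (j + l) * int i) / of_nat d"
      by (simp only: sqrt_sq_c E_add[symmetric]) (simp add: algebra_simps)
    finally show "M_basis d k j i * M_basis d k l i = E d (int (2 * k) * int i ^ 2 + int (j + l) * int i) / of_nat d" .
  qed
  also have "\<dots> = ?S / of_nat d" by (simp add: sum_divide_distrib)
  finally have g: "(\<Sum>i<d. M_basis d k j i * M_basis d k l i) = ?S / of_nat d" .
  have nd: "\<not> int d dvd int (2 * k)"
  proof
    assume h: "int d dvd int (2 * k)"
    have p: "prime (int d)" using assms(3) by simp
    have "int d dvd 2 \<or> int d dvd int k" using h p by (simp add: prime_dvd_mult_iff)
    moreover have "\<not> int d dvd 2"
    proof
      assume "int d dvd 2" then have "int d \<le> 2" by (rule zdvd_imp_le) simp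
      then show False using assms(4) by simp
    qed
    moreover have "\<not> int d dvd int k"
    proof
      assume "int d dvd int k" then have "d dvd k" by simp
      then have "d \<le> k" using assms(5) by (simp add: dvd_imp_le)
      then show False using assms(6) d0 by simp
    qed
    ultimately show False by blast
  qed
  have SS: "?S * cnj ?S = of_nat d" by (rule gauss_sq[OF assms(3,4) nd])
  have "of_real (cmod ?S ^ 2) = (of_nat d :: complex)" using SS complex_norm_square by metis
  then have cS: "cmod ?S ^ 2 = real d" by (metis of_real_eq_iff of_real_of_nat_eq)
  have "cmod (?S / of_nat d) ^ 2 = cmod ?S ^ 2 / real d ^ 2"
    by (simp add: norm_divide power_divide)
  then have "cmod (\<Sum>i<d. M_basis d k j i * M_basis d k l i) ^ 2 = 1 / real d"
    unfolding g cS using d0 by (simp add: power2_eq_square)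
  moreover have jf: "joint_prob d (rho_iso d p) (M_basis d k) j l = p * cmod (\<Sum>i<d. M_basis d k j i * M_basis d k l i) ^ 2 / real d + (1 - p) / real d ^ 2"
    by (rule joint_prob_formula[OF _ assms(1,2)]) (erule n)
  ultimately have "joint_prob d (rho_iso d p) (M_basis d k) j l = p * (1 / real d) / real d + (1 - p) / real d ^ 2"
    by simp
  also have "\<dots> = 1 / real d ^ 2" using d0 by (simp add: field_simps power2_eq_square)
  finally show ?thesis .
qed

lemma plogp_eq: "plogp x = x * log 2 x"
  unfolding plogp_def by simp

lemma sum_if_card1:
  assumes "finite A" "card {k \<in> A. P k} = 1"
  shows "(\<Sum>k\<in>A. h (if P k then u else v)) = h u + real (card A - 1) * (h v :: real)"
proof -
  have "(\<Sum>k\<in>A. h (if P k then u else v)) = (\<Sum>k\<in>A. if P k then h u else h v)"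
    by (intro sum.cong refl) simp
  also have "\<dots> = (\<Sum>k\<in>A \<inter> {x. P x}. h u) + (\<Sum>k\<in>A \<inter> - {x. P x}. h v)"
    by (rule sum.If_cases[OF assms(1)])
  also have "\<dots> = real (card (A \<inter> {x. P x})) * h u + real (card (A \<inter> - {x. P x})) * h v"
    by simp
  also have "A \<inter> {x. P x} = {k \<in> A. P k}" by auto
  also have "A \<inter> - {x. P x} = A - {k \<in> A. P k}" by auto
  finally have eq: "(\<Sum>k\<in>A. h (if P k then u else v)) = real (card {k \<in> A. P k}) * h u + real (card (A - {k \<in> A. P k})) * h v" .
  have "card (A - {k \<in> A. P k}) = card A - 1"
    using assms by (simp add: card_Diff_subset)
  then show ?thesis using eq assms(2) by simp
qed

lemma MI_shape:
  fixes \<alpha> \<beta> :: real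
  assumes d0: "d > 0"
    and J: "\<And>j k. j < d \<Longrightarrow> k < d \<Longrightarrow> joint_prob d rho m j k = (if R j k then \<alpha> else \<beta>)"
    and row: "\<And>j. j < d \<Longrightarrow> card {k \<in> {..<d}. R j k} = 1"
    and col: "\<And>k. k < d \<Longrightarrow> card {j \<in> {..<d}. R j k} = 1"
    and tot: "\<alpha> + (real d - 1) * \<beta> = 1 / real d"
  shows "mutual_info d rho m = 2 * log 2 (real d) + real d * \<alpha> * log 2 \<alpha> + (real d ^ 2 - real d) * \<beta> * log 2 \<beta>"
proof -
  have dm1: "real (d - 1) = real d - 1" using d0 by (simp add: of_nat_diff)
  have pl: "plogp (1 / real d) = - (1 / real d) * log 2 (real d)"
    unfolding plogp_eq using d0 by (simp add: log_divide)
  have HA: "entropy_A d rho m = log 2 (real d)"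
  proof -
    have "(\<Sum>k<d. joint_prob d rho m j k) = 1 / real d" if "j < d" for j
    proof -
      have "(\<Sum>k<d. joint_prob d rho m j k) = (\<Sum>k<d. id (if R j k then \<alpha> else \<beta>))"
        using J that by simp
      also have "\<dots> = \<alpha> + real (d - 1) * \<beta>"
        using sum_if_card1[of "{..<d}" "R j" id \<alpha> \<beta>] row[OF that] by simp
      finally show ?thesis using dm1 tot by simp
    qed
    then have "entropy_A d rho m = - (\<Sum>j<d. plogp (1 / real d))"
      unfolding entropy_A_def by simp
    also have "\<dots> = log 2 (real d)" using d0 by (simp add: pl)
    finally show ?thesis .
  qed
  have HB: "entropy_B d rho m = log 2 (real d)"
  proof -
    have "(\<Sum>j<d. joint_prob d rho m j k) = 1 / real d" if "k < d" for k
    proof -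
      have "(\<Sum>j<d. joint_prob d rho m j k) = (\<Sum>j<d. id (if R j k then \<alpha> else \<beta>))"
        using J that by simp
      also have "\<dots> = \<alpha> + real (d - 1) * \<beta>"
        using sum_if_card1[of "{..<d}" "\<lambda>j. R j k" id \<alpha> \<beta>] col[OF that] by simp
      finally show ?thesis using dm1 tot by simp
    qed
    then have "entropy_B d rho m = - (\<Sum>k<d. plogp (1 / real d))"
      unfolding entropy_B_def by simp
    also have "\<dots> = log 2 (real d)" using d0 by (simp add: pl)
    finally show ?thesis .
  qed
  have HAB: "entropy_AB d rho m = - (real d * (plogp \<alpha> + (real d - 1) * plogp \<beta>))"
  proof -
    have "(\<Sum>k<d. plogp (joint_prob d rho m j k)) = plogp \<alpha> + (real d - 1) * plogp \<beta>" if "j < d" for j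
    proof -
      have "(\<Sum>k<d. plogp (joint_prob d rho m j k)) = (\<Sum>k<d. plogp (if R j k then \<alpha> else \<beta>))"
        using J that by simp
      also have "\<dots> = plogp \<alpha> + real (d - 1) * plogp \<beta>"
        using sum_if_card1[of "{..<d}" "R j" plogp \<alpha> \<beta>] row[OF that] by simp
      finally show ?thesis using dm1 by simp
    qed
    then show ?thesis unfolding entropy_AB_def by simp
  qed
  show ?thesis unfolding mutual_info_def HA HB HAB plogp_eq
    by (simp add: algebra_simps power2_eq_square)
qed

lemma card_eq1: "card {k \<in> {..<d}. k = j} = 1" if "j < d" for j d :: nat
proof -
  have "{k \<in> {..<d}. k = j} = {j}" using that by auto
  then show ?thesis by simp
qed

lemma dvd_iff_X: fixes j k d :: nat assumes "j < d" "k < d"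
  shows "d dvd j + k \<longleftrightarrow> k = (d - j) mod d"
proof
  assume "d dvd j + k"
  then obtain c where c: "j + k = d * c" by blast
  show "k = (d - j) mod d"
  proof (cases "c = 0")
    case True
    then have "j = 0" "k = 0" using c by auto
    then show ?thesis by simp
  next
    case False
    have "c < 2"
    proof (rule ccontr)
      assume "\<not> c < 2"
      then have "d * 2 \<le> d * c" by simp
      then show False using c assms by linarith
    qed
    then have "c = 1" using False by simp
    then have "j + k = d" using c by simp
    then show ?thesis using assms by (cases "j = 0") auto
  qed
next
  assume k: "k = (d - j) mod d"
  show "d dvd j + k"
  proof (cases "j = 0")
    case True then show ?thesis using k by simp
  next
    case False
    then have "k = d - j" using k assms by simp
    then have "j + k = d" using assms by simp
    then show ?thesis by simp
  qed
qed

lemma card_X_row: fixes j d :: nat assumes "j < d" shows "card {k \<in> {..<d}. d dvd j + k} = 1"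
proof -
  have "{k \<in> {..<d}. d dvd j + k} = {(d - j) mod d}"
    using dvd_iff_X[OF assms] assms by auto
  then show ?thesis by simp
qed

lemma card_X_col: fixes k d :: nat assumes "k < d" shows "card {j \<in> {..<d}. d dvd j + k} = 1"
proof -
  have "{j \<in> {..<d}. d dvd j + k} = {j \<in> {..<d}. d dvd k + j}" by (metis add.commute)
  then show ?thesis using card_X_row[OF assms] by simp
qed

theorem proposition5:
  fixes d :: nat and p :: real
  assumes "prime d" and "d \<ge> 3"
    and "- 1 / (real d ^ 2 - 1) \<le> p" and "p \<le> 1"
  shows "(\<forall>k\<in>{1..d-1}. mutual_info d (rho_iso d p) (M_basis d k) = 0)
    \<and> mutual_info d (rho_iso d p) (Z_basis d) = mutual_info d (rho_iso d p) (X_basis d)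
    \<and> mutual_info d (rho_iso d p) (Z_basis d) =
        2 * log 2 (real d)
        + real d * (p / real d + (1 - p) / real d ^ 2) * log 2 (p / real d + (1 - p) / real d ^ 2)
        + (real d ^ 2 - real d) * ((1 - p) / real d ^ 2) * log 2 ((1 - p) / real d ^ 2)"
proof -
  have d0: "d > 0" using assms(2) by simp
  let ?a = "p / real d + (1 - p) / real d ^ 2"
  let ?b = "(1 - p) / real d ^ 2"
  let ?RHS = "2 * log 2 (real d) + real d * ?a * log 2 ?a + (real d ^ 2 - real d) * ?b * log 2 ?b"
  have tot: "?a + (real d - 1) * ?b = 1 / real d"
    using d0 by (simp add: field_simps power2_eq_square)
  have Z: "mutual_info d (rho_iso d p) (Z_basis d) = ?RHS"
  proof (rule MI_shape[OF d0 _ _ _ tot, where R = "\<lambda>j k. k = j"])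
    show "\<And>j k. j < d \<Longrightarrow> k < d \<Longrightarrow> joint_prob d (rho_iso d p) (Z_basis d) j k = (if k = j then ?a else ?b)"
      using Z_joint d0 by auto
    show "\<And>j. j < d \<Longrightarrow> card {k \<in> {..<d}. k = j} = 1" by (rule card_eq1)
    show "\<And>k. k < d \<Longrightarrow> card {j \<in> {..<d}. k = j} = 1"
    proof -
      fix k :: nat assume "k < d"
      have "{j \<in> {..<d}. k = j} = {k}" using \<open>k < d\<close> by auto
      then show "card {j \<in> {..<d}. k = j} = 1" by simp
    qed
  qed
  have X: "mutual_info d (rho_iso d p) (X_basis d) = ?RHS"
  proof (rule MI_shape[OF d0 _ _ _ tot, where R = "\<lambda>j k. d dvd j + k"])
    show "\<And>j k. j < d \<Longrightarrow> k < d \<Longrightarrow> joint_prob d (rho_iso d p) (X_basis d) j k = (if d dvd j + k then ?a else ?b)"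
      using X_joint d0 by auto
    show "\<And>j. j < d \<Longrightarrow> card {k \<in> {..<d}. d dvd j + k} = 1" by (rule card_X_row)
    show "\<And>k. k < d \<Longrightarrow> card {j \<in> {..<d}. d dvd j + k} = 1" by (rule card_X_col)
  qed
  have M: "mutual_info d (rho_iso d p) (M_basis d k) = 0" if k: "k \<in> {1..d-1}" for k
  proof -
    let ?c = "1 / real d ^ 2"
    have tot2: "?c + (real d - 1) * ?c = 1 / real d"
      using d0 by (simp add: field_simps power2_eq_square)
    have "mutual_info d (rho_iso d p) (M_basis d k) = 2 * log 2 (real d) + real d * ?c * log 2 ?c + (real d ^ 2 - real d) * ?c * log 2 ?c"
    proof (rule MI_shape[OF d0 _ _ _ tot2, where R = "\<lambda>j k. k = j"])
      show "\<And>j l. j < d \<Longrightarrow> l < d \<Longrightarrow> joint_prob d (rho_iso d p) (M_basis d k) j l = (if l = j then ?c else ?c)"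
        using M_joint[OF _ _ assms(1,2)] k by auto
      show "\<And>j. j < d \<Longrightarrow> card {k \<in> {..<d}. k = j} = 1" by (rule card_eq1)
      show "\<And>k. k < d \<Longrightarrow> card {j \<in> {..<d}. k = j} = 1"
      proof -
        fix k :: nat assume "k < d"
        have "{j \<in> {..<d}. k = j} = {k}" using \<open>k < d\<close> by auto
        then show "card {j \<in> {..<d}. k = j} = 1" by simp
      qed
    qed
    also have "\<dots> = 2 * log 2 (real d) + (real d * ?c + (real d ^ 2 - real d) * ?c) * log 2 ?c"
      by (simp add: algebra_simps)
    also have "real d * ?c + (real d ^ 2 - real d) * ?c = 1"
      using d0 by (simp add: field_simps power2_eq_square)
    also have "log 2 ?c = - 2 * log 2 (real d)"
      using d0 by (simp add: log_divide log_nat_power)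
    finally show ?thesis by simp
  qed
  show ?thesis using Z X M by auto
qed

end
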